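(* Let $n\geqslant1$, $N\in\mathbb{N}$, $\gamma\in\mathbb{R}\setminus\{0\}$, let $a_0,\ldots,a_n$ be functions holomorphic near $t=0$ with $a_n\equiv1$, and let $M(x,t,u_0,\ldots,u_n)$ be meromorphic in $t$ and holomorphic in the remaining variables near $0\in\mathbb{C}^{n+3}$. Assume that for every integer $k\geqslant1$ the polynomial $$P_k(\lambda)=\sum_{j=0}^n a_j(0)\,(k+N+{\rm i}\gamma\lambda)^j$$ has no integer roots. Suppose the equation $$\sum_{j=0}^n a_j(x^{{\rm i}\gamma})(\delta+N)^j u=x\,M(x,x^{{\rm i}\gamma},u,\delta u,\ldots,\delta^n u),\qquad\delta=x\frac{d}{dx},$$ has a formal solution $\psi=\sum_{k=1}^\infty c_k(x^{{\rm i}\gamma})x^k$ with each $c_k$ meromorphic at $t=0$. Then $\psi$ is the unique exotic formal series of the form $\sum_{k=1}^\infty c_k(x^{{\rm i}\gamma})x^k$ (with $c_k$ meromorphic at $t=0$) satisfying this equation.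
   Context: $x^{{\rm i}\gamma}=e^{{\rm i}\gamma\ln x}$. On exotic series $\delta$ acts termwise by $\delta\bigl(p(x^{{\rm i}\gamma})x^k\bigr)=\bigl((k+{\rm i}\gamma\,t\tfrac{d}{dt})p\bigr)(x^{{\rm i}\gamma})x^k$, and substitution into $M$ is formal, collecting terms by powers of $x$. *)

theory Defs
  imports "HOL-Complex_Analysis.Complex_Analysis" "HOL-Library.Function_Algebras"
    "HOL-Computational_Algebra.Formal_Power_Series"
begin

text \<open>Exotic formal series  sum_k c_k(x^{i gamma}) x^k  are represented as formal power
  series in x whose coefficients are functions of the variable t (standing for x^{i gamma});
  the ring structure on functions is pointwise (Function_Algebras).  Coefficients are compared
  as germs at t = 0 (equality on a punctured neighbourhood of 0).\<close>

type_synonym exotic = "(complex \<Rightarrow> complex) fps"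

definition delta_shift :: "real \<Rightarrow> nat \<Rightarrow> exotic \<Rightarrow> exotic" where
  "delta_shift \<gamma> N p = Abs_fps (\<lambda>k t. of_nat (k + N) * (p $ k) t
                                   + \<i> * of_real \<gamma> * t * deriv (p $ k) t)"

abbreviation delta :: "real \<Rightarrow> exotic \<Rightarrow> exotic" where
  "delta \<gamma> \<equiv> delta_shift \<gamma> 0"

definition multi_idx :: "nat \<Rightarrow> (nat \<Rightarrow> nat) set" where
  "multi_idx n = PiE {..n} (\<lambda>_. UNIV)"

text \<open>M(x,t,u_0,..,u_n) = sum_{i,beta} Mc i beta (t) x^i u^beta, where Mc i beta is meromorphic
  in t.  "Meromorphic in t and holomorphic in the other variables near 0 in C^{n+3}":
  t^m M is holomorphic near 0 for some m, i.e. Mc i beta t = t^{-m} sum_l mc i l beta t^l with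
  the full power series absolutely convergent on a polydisc of radius rho > 0.\<close>
definition mero_holo_coeffs :: "nat \<Rightarrow> (nat \<Rightarrow> (nat \<Rightarrow> nat) \<Rightarrow> complex \<Rightarrow> complex) \<Rightarrow> bool" where
  "mero_holo_coeffs n Mc \<longleftrightarrow>
     (\<exists>(m::nat) (mc :: nat \<Rightarrow> nat \<Rightarrow> (nat \<Rightarrow> nat) \<Rightarrow> complex) (\<rho>::real). \<rho> > 0 \<and>
        (\<lambda>(i, l, \<beta>). norm (mc i l \<beta>) * \<rho> ^ (i + l + sum \<beta> {..n}))
            summable_on (UNIV \<times> UNIV \<times> multi_idx n) \<and>
        (\<forall>i. \<forall>\<beta>\<in>multi_idx n. \<forall>t. t \<noteq> 0 \<and> norm t < \<rho> \<longrightarrow>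
            Mc i \<beta> t = inverse (t ^ m) * (\<Sum>l. mc i l \<beta> * t ^ l)))"

text \<open>Coefficient of x^K in  x M(x, x^{i gamma}, u, delta u, ..., delta^n u), computed formally.
  Since u has no x^0 term, only i < K and beta_j < K contribute.\<close>
definition rhs_coeff :: "real \<Rightarrow> nat \<Rightarrow> (nat \<Rightarrow> (nat \<Rightarrow> nat) \<Rightarrow> complex \<Rightarrow> complex)
                         \<Rightarrow> exotic \<Rightarrow> nat \<Rightarrow> complex \<Rightarrow> complex" where
  "rhs_coeff \<gamma> n Mc u K =
     (if K = 0 then 0 else
      (\<Sum>i<K. \<Sum>\<beta>\<in>PiE {..n} (\<lambda>_. {..<K}).
          Mc i \<beta> * (fps_X ^ i * (\<Prod>j\<le>n. ((delta \<gamma> ^^ j) u) ^ \<beta> j)) $ (K - 1)))"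

definition lhs :: "real \<Rightarrow> nat \<Rightarrow> nat \<Rightarrow> (nat \<Rightarrow> complex \<Rightarrow> complex) \<Rightarrow> exotic \<Rightarrow> exotic" where
  "lhs \<gamma> n N a u = (\<Sum>j\<le>n. fps_const (a j) * (delta_shift \<gamma> N ^^ j) u)"

definition exotic_solution ::
  "real \<Rightarrow> nat \<Rightarrow> nat \<Rightarrow> (nat \<Rightarrow> complex \<Rightarrow> complex)
     \<Rightarrow> (nat \<Rightarrow> (nat \<Rightarrow> nat) \<Rightarrow> complex \<Rightarrow> complex) \<Rightarrow> exotic \<Rightarrow> bool" where
  "exotic_solution \<gamma> n N a Mc u \<longleftrightarrow>
     u $ 0 = 0 \<and> (\<forall>k. (u $ k) meromorphic_on {0}) \<and>
     (\<forall>K. \<forall>\<^sub>F t in at 0. (lhs \<gamma> n N a u $ K) t = rhs_coeff \<gamma> n Mc u K t)"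

end

theory Submission
  imports Defs
begin

lemma sum_fun_app: "(\<Sum>x\<in>A. f x) t = (\<Sum>x\<in>A. (f x :: 'b \<Rightarrow> 'c::comm_monoid_add) t)"
  by (induction A rule: infinite_finite_induct) auto

definition Dop :: "real \<Rightarrow> complex \<Rightarrow> (complex \<Rightarrow> complex) \<Rightarrow> complex \<Rightarrow> complex" where
  "Dop \<gamma> c p = (\<lambda>t. c * p t + \<i> * of_real \<gamma> * t * deriv p t)"

lemma delta_shift_nth: "delta_shift \<gamma> N p $ k = Dop \<gamma> (of_nat (k+N)) (p $ k)"
  by (simp add: delta_shift_def Dop_def)

lemma delta_shift_pow_nth: "((delta_shift \<gamma> N ^^ j) p) $ k = (Dop \<gamma> (of_nat (k+N)) ^^ j) (p $ k)"
  by (induction j) (simp_all add: delta_shift_nth)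

lemma lhs_nth: "lhs \<gamma> n N a u $ K = (\<lambda>t. \<Sum>j\<le>n. a j t * (Dop \<gamma> (of_nat (K+N)) ^^ j) (u $ K) t)"
  by (auto simp: lhs_def fps_sum_nth delta_shift_pow_nth sum_fun_app fps_mult_left_const_nth)

lemma Dop_holo: assumes "f holomorphic_on S" "open S" shows "Dop \<gamma> c f holomorphic_on S"
proof -
  have "deriv f holomorphic_on S" using assms by (rule holomorphic_deriv)
  then show ?thesis unfolding Dop_def using assms by (intro holomorphic_intros)
qed

lemma Dop_pow_holo: "f holomorphic_on S \<Longrightarrow> open S \<Longrightarrow> (Dop \<gamma> c ^^ j) f holomorphic_on S"
  by (induction j) (auto intro: Dop_holo)

lemma Dop_cong: assumes "open S" "\<And>t. t\<in>S \<Longrightarrow> f t = g t" "t \<in> S"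
  shows "Dop \<gamma> c f t = Dop \<gamma> c g t"
proof -
  have "deriv f t = deriv g t"
    by (rule deriv_cong_ev) (use eventually_nhds_in_open[OF assms(1,3)] assms(2) in \<open>auto elim: eventually_mono\<close>)
  then show ?thesis using assms by (simp add: Dop_def)
qed

lemma Dop_pow_cong: assumes "open S" "\<And>t. t\<in>S \<Longrightarrow> f t = g t"
  shows "t \<in> S \<Longrightarrow> (Dop \<gamma> c ^^ j) f t = (Dop \<gamma> c ^^ j) g t"
proof (induction j arbitrary: t)
  case 0 then show ?case using assms by simp
next
  case (Suc j) then show ?case
    using Dop_cong[OF assms(1), of "(Dop \<gamma> c ^^ j) f" "(Dop \<gamma> c ^^ j) g"] by simp
qed

lemma Dop_diff: assumes "open S" "f holomorphic_on S" "g holomorphic_on S" "t \<in> S"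
  shows "Dop \<gamma> c (\<lambda>t. f t - g t) t = Dop \<gamma> c f t - Dop \<gamma> c g t"
proof -
  have "f field_differentiable at t" "g field_differentiable at t"
    using assms holomorphic_on_imp_differentiable_at by blast+
  then have "deriv (\<lambda>t. f t - g t) t = deriv f t - deriv g t" by (rule deriv_diff)
  then show ?thesis by (simp only: Dop_def) (simp add: algebra_simps)
qed

lemma Dop_pow_diff: assumes "open S" "f holomorphic_on S" "g holomorphic_on S"
  shows "t \<in> S \<Longrightarrow> (Dop \<gamma> c ^^ j) (\<lambda>t. f t - g t) t = (Dop \<gamma> c ^^ j) f t - (Dop \<gamma> c ^^ j) g t"
proof (induction j arbitrary: t)
  case 0 then show ?case by simp
next
  case (Suc j)
  have "(Dop \<gamma> c ^^ Suc j) (\<lambda>t. f t - g t) t = Dop \<gamma> c ((Dop \<gamma> c ^^ j) (\<lambda>t. f t - g t)) t" by simp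
  also have "\<dots> = Dop \<gamma> c (\<lambda>t. (Dop \<gamma> c ^^ j) f t - (Dop \<gamma> c ^^ j) g t) t"
    by (rule Dop_cong[OF assms(1) Suc.IH Suc.prems])
  also have "\<dots> = Dop \<gamma> c ((Dop \<gamma> c ^^ j) f) t - Dop \<gamma> c ((Dop \<gamma> c ^^ j) g) t"
    by (rule Dop_diff[OF assms(1) Dop_pow_holo Dop_pow_holo Suc.prems]) (use assms in auto)
  finally show ?case by simp
qed

lemma Dop_pow_ev: assumes "\<forall>\<^sub>F t in at 0. f t = g t"
  shows "\<forall>\<^sub>F t in at 0. (Dop \<gamma> c ^^ j) f t = (Dop \<gamma> c ^^ j) g t"
proof -
  obtain d where d: "d > 0" "\<And>t. t \<noteq> 0 \<Longrightarrow> dist t 0 < d \<Longrightarrow> f t = g t"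
    using assms unfolding eventually_at by auto
  define S where "S = ball (0::complex) d - {0}"
  have S: "open S" by (simp add: S_def open_Diff)
  have "t \<in> S \<Longrightarrow> (Dop \<gamma> c ^^ j) f t = (Dop \<gamma> c ^^ j) g t" for t
    by (rule Dop_pow_cong[OF S]) (auto simp: S_def d(2) dist_commute)
  moreover have "\<forall>\<^sub>F t in at 0. t \<in> S" 
    using eventually_at_in_open[of "ball 0 d" 0] d(1) by (auto simp: S_def dist_0_norm elim: eventually_mono)
  ultimately show ?thesis by (auto elim: eventually_mono)
qed

definition agree :: "complex \<Rightarrow> nat \<Rightarrow> exotic \<Rightarrow> exotic \<Rightarrow> bool" where
  "agree t m p q \<longleftrightarrow> (\<forall>k\<le>m. (p $ k) t = (q $ k) t)"

lemma agree_mult: "agree t m p p' \<Longrightarrow> agree t m q q' \<Longrightarrow> agree t m (p*q) (p'*q')"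
  unfolding agree_def by (auto simp: fps_mult_nth sum_fun_app intro!: sum.cong)

lemma agree_refl: "agree t m p p"
  by (simp add: agree_def)

lemma agree_power: "agree t m p q \<Longrightarrow> agree t m (p^e) (q^e)"
  by (induction e) (auto simp: agree_refl agree_mult)

lemma agree_prod: "(\<And>j. j\<in>A \<Longrightarrow> agree t m (f j) (g j)) \<Longrightarrow> agree t m (\<Prod>j\<in>A. f j) (\<Prod>j\<in>A. g j)"
  by (induction A rule: infinite_finite_induct) (auto simp: agree_refl agree_mult)

lemma rhs_local:
  fixes u v :: exotic
  assumes "\<forall>k<K. \<forall>\<^sub>F t in at 0. (u $ k) t = (v $ k) t"
  shows "\<forall>\<^sub>F t in at 0. rhs_coeff \<gamma> n Mc u K t = rhs_coeff \<gamma> n Mc v K t"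
proof -
  have "\<forall>\<^sub>F t in at 0. \<forall>j\<in>{..n}. \<forall>k\<in>{..<K}. ((delta \<gamma> ^^ j) u $ k) t = ((delta \<gamma> ^^ j) v $ k) t"
    using assms by (intro eventually_ball_finite ballI finite_atMost finite_lessThan)
       (auto simp: delta_shift_pow_nth intro: Dop_pow_ev)
  then show ?thesis
  proof (rule eventually_mono)
    fix t assume H: "\<forall>j\<in>{..n}. \<forall>k\<in>{..<K}. ((delta \<gamma> ^^ j) u $ k) t = ((delta \<gamma> ^^ j) v $ k) t"
    show "rhs_coeff \<gamma> n Mc u K t = rhs_coeff \<gamma> n Mc v K t"
    proof (cases "K = 0")
      case True then show ?thesis by (simp add: rhs_coeff_def)
    next
      case False
      have "agree t (K-1) (fps_X ^ i * (\<Prod>j\<le>n. ((delta \<gamma> ^^ j) u) ^ \<beta> j))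
                          (fps_X ^ i * (\<Prod>j\<le>n. ((delta \<gamma> ^^ j) v) ^ \<beta> j))" for i \<beta>
        apply (intro agree_mult agree_refl agree_prod agree_power)
        using H False unfolding agree_def by auto
      then have "((fps_X ^ i * (\<Prod>j\<le>n. ((delta \<gamma> ^^ j) u) ^ \<beta> j)) $ (K-1)) t =
                 ((fps_X ^ i * (\<Prod>j\<le>n. ((delta \<gamma> ^^ j) v) ^ \<beta> j)) $ (K-1)) t" for i \<beta>
        unfolding agree_def by blast
      then show ?thesis using False unfolding rhs_coeff_def
        by (simp add: sum_fun_app)
    qed
  qed
qed

lemma main_analytic:
  fixes d :: "complex \<Rightarrow> complex" and a :: "nat \<Rightarrow> complex \<Rightarrow> complex"
  assumes iso: "isolated_singularity_at d 0" and ness: "not_essential d 0"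
    and r: "r > 0" and holo: "\<forall>j\<le>n. a j holomorphic_on ball 0 r"
    and P: "\<forall>z::int. (\<Sum>j\<le>n. a j 0 * (c + \<i> * of_real \<gamma> * of_int z) ^ j) \<noteq> 0"
    and L: "\<forall>\<^sub>F t in at 0. (\<Sum>j\<le>n. a j t * (Dop \<gamma> c ^^ j) d t) = 0"
  shows "\<forall>\<^sub>F t in at 0. d t = 0"
proof (rule ccontr)
  assume "\<not> ?thesis"
  then have fr: "\<exists>\<^sub>F t in at 0. d t \<noteq> 0" by (simp add: not_eventually)
  define m where "m = zorder d 0"
  define g where "g = zor_poly d 0"
  obtain r' where g0: "g 0 \<noteq> 0" and r': "r' > 0" "g holomorphic_on cball 0 r'"
     and dg: "\<And>w. w \<in> cball 0 r' - {0} \<Longrightarrow> d w = g w * w powi m"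
    using zorder_exist[OF iso ness fr] unfolding m_def g_def by auto
  define c' where "c' = c + \<i> * of_real \<gamma> * of_int m"
  define E where "E = (\<lambda>h::complex\<Rightarrow>complex. \<lambda>t. c' * h t + \<i> * of_real \<gamma> * t * deriv h t)"
  define B where "B = ball (0::complex) r'"
  have B: "open B" by (simp add: B_def)
  have gB: "g holomorphic_on B" using r' unfolding B_def by (meson ball_subset_cball holomorphic_on_subset)
  have Eholo: "E h holomorphic_on B" if "h holomorphic_on B" for h
  proof -
    have "deriv h holomorphic_on B" using that B by (rule holomorphic_deriv)
    then show ?thesis unfolding E_def using that B by (intro holomorphic_intros)
  qed
  have Ejholo: "(E ^^ j) g holomorphic_on B" for j
    by (induction j) (auto intro: Eholo gB)
  have E0: "(E ^^ j) g 0 = c' ^ j * g 0" for j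
    by (induction j) (simp_all add: E_def)
  have o: "open (B - {0})" using B by (simp add: open_Diff)
  have Dd: "t \<in> B - {0} \<Longrightarrow> (Dop \<gamma> c ^^ j) d t = t powi m * (E ^^ j) g t" for j t
  proof (induction j arbitrary: t)
    case 0 then show ?case using dg by (auto simp: B_def mult.commute)
  next
    case (Suc j)
    let ?h = "(E ^^ j) g"
    have "(Dop \<gamma> c ^^ Suc j) d t = Dop \<gamma> c (\<lambda>t. t powi m * ?h t) t"
      using Dop_cong[OF o Suc.IH Suc.prems] by simp
    also have "\<dots> = t powi m * (E ^^ Suc j) g t"
    proof -
      have hd: "(?h has_field_derivative deriv ?h t) (at t)"
        by (rule holomorphic_derivI[OF Ejholo B]) (use Suc.prems in auto)
      have t0: "t \<noteq> 0" using Suc.prems by auto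
      have "((\<lambda>t. t powi m * ?h t) has_field_derivative
              (of_int m * t powi (m-1) * 1 * ?h t + deriv ?h t * t powi m)) (at t)"
        by (rule DERIV_mult[OF DERIV_power_int[OF DERIV_ident] hd]) (use t0 in auto)
      then have dv: "deriv (\<lambda>t. t powi m * ?h t) t = of_int m * t powi (m-1) * 1 * ?h t + deriv ?h t * t powi m"
        by (rule DERIV_imp_deriv)
      have tm: "t powi m = t * t powi (m-1)" using power_int_minus_mult[of t m] t0 by (simp add: mult.commute)
      show ?thesis unfolding Dop_def dv by (simp add: E_def c'_def tm algebra_simps)
    qed
    finally show ?case .
  qed
  define H where "H = (\<lambda>t. \<Sum>j\<le>n. a j t * (E ^^ j) g t)"
  define R where "R = min r r'"
  have R: "R > 0" using r r' by (simp add: R_def)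
  have Hholo: "H holomorphic_on ball 0 R"
    unfolding H_def
  proof (intro holomorphic_intros)
    fix j assume "j \<in> {..n}"
    then have "a j holomorphic_on ball 0 r" using holo by auto
    then show "a j holomorphic_on ball 0 R"
      by (rule holomorphic_on_subset) (auto simp: R_def)
    show "(E ^^ j) g holomorphic_on ball 0 R"
      by (rule holomorphic_on_subset[OF Ejholo[of j]]) (auto simp: R_def B_def)
  qed
  then have "continuous_on (ball 0 R) H" by (rule holomorphic_on_imp_continuous_on)
  then have "isCont H 0" using R by (simp add: continuous_on_eq_continuous_at)
  then have lim: "(H \<longlongrightarrow> H 0) (at 0)" by (simp add: isCont_def)
  have "\<forall>\<^sub>F t in at 0. t \<in> B - {0}" using eventually_at_in_open[OF B] r' by (simp add: B_def)
  then have "\<forall>\<^sub>F t in at 0. H t = 0" using L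
  proof (eventually_elim)
    case (elim t)
    then have "t powi m * H t = 0"
      by (simp add: H_def Dd sum_distrib_left mult.assoc mult.left_commute)
    moreover have "t \<noteq> 0" using elim by auto
    ultimately show ?case by simp
  qed
  then have "(H \<longlongrightarrow> 0) (at 0)" by (rule tendsto_eventually)
  with lim have "H 0 = 0" using tendsto_unique[OF at_neq_bot] by blast
  moreover have "H 0 = (\<Sum>j\<le>n. a j 0 * c' ^ j) * g 0"
    by (simp add: H_def E0 sum_distrib_right mult.assoc)
  moreover have "(\<Sum>j\<le>n. a j 0 * c' ^ j) \<noteq> 0" using P unfolding c'_def by blast
  ultimately show False using g0 by simp
qed

theorem lemma2:
  fixes n N :: nat and \<gamma> :: real
    and a :: "nat \<Rightarrow> complex \<Rightarrow> complex"
    and Mc :: "nat \<Rightarrow> (nat \<Rightarrow> nat) \<Rightarrow> complex \<Rightarrow> complex"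
    and \<psi> :: exotic
  assumes "n \<ge> 1" and "\<gamma> \<noteq> 0"
    and "\<exists>r>0. \<forall>j\<le>n. a j holomorphic_on ball 0 r"
    and "a n = (\<lambda>_. 1)"
    and "mero_holo_coeffs n Mc"
    and "\<forall>k::nat\<ge>1. \<forall>z::int.
           (\<Sum>j\<le>n. a j 0 * (of_nat (k + N) + \<i> * of_real \<gamma> * of_int z) ^ j) \<noteq> 0"
    and "exotic_solution \<gamma> n N a Mc \<psi>"
  shows "\<forall>\<phi>. exotic_solution \<gamma> n N a Mc \<phi> \<longrightarrow>
           (\<forall>k. \<forall>\<^sub>F t in at 0. (\<phi> $ k) t = (\<psi> $ k) t)"
proof (intro allI impI)
  fix \<phi> assume phi: "exotic_solution \<gamma> n N a Mc \<phi>"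
  have psi: "exotic_solution \<gamma> n N a Mc \<psi>" by fact
  obtain r where r: "r > 0" "\<forall>j\<le>n. a j holomorphic_on ball 0 r" using assms(3) by auto
  have "\<forall>k<K. \<forall>\<^sub>F t in at 0. (\<phi> $ k) t = (\<psi> $ k) t" for K
  proof (induction K)
    case 0 show ?case by simp
  next
    case (Suc K)
    have "\<forall>\<^sub>F t in at 0. (\<phi> $ K) t = (\<psi> $ K) t"
    proof (cases "K = 0")
      case True then show ?thesis using phi psi by (simp add: exotic_solution_def)
    next
      case False
      define c where "c = (of_nat (K + N) :: complex)"
      have rhs: "\<forall>\<^sub>F t in at 0. rhs_coeff \<gamma> n Mc \<phi> K t = rhs_coeff \<gamma> n Mc \<psi> K t"
        by (rule rhs_local[OF Suc.IH])
      have e1: "\<forall>\<^sub>F t in at 0. (lhs \<gamma> n N a \<phi> $ K) t = rhs_coeff \<gamma> n Mc \<phi> K t"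
        using phi by (simp add: exotic_solution_def)
      have e2: "\<forall>\<^sub>F t in at 0. (lhs \<gamma> n N a \<psi> $ K) t = rhs_coeff \<gamma> n Mc \<psi> K t"
        using psi by (simp add: exotic_solution_def)
      have mphi: "(\<phi> $ K) meromorphic_on {0}" and mpsi: "(\<psi> $ K) meromorphic_on {0}"
        using phi psi by (auto simp: exotic_solution_def)
      define d where "d = (\<lambda>t. (\<phi> $ K) t - (\<psi> $ K) t)"
      have md: "d meromorphic_on {0}" unfolding d_def using mphi mpsi by (rule meromorphic_on_diff)
      obtain r1 where r1: "r1 > 0" "(\<phi> $ K) analytic_on ball 0 r1 - {0}"
        using mphi unfolding meromorphic_at_iff isolated_singularity_at_def by auto
      obtain r2 where r2: "r2 > 0" "(\<psi> $ K) analytic_on ball 0 r2 - {0}"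
        using mpsi unfolding meromorphic_at_iff isolated_singularity_at_def by auto
      define S where "S = ball (0::complex) (min r1 r2) - {0}"
      have S: "open S" by (simp add: S_def open_Diff)
      have h1: "(\<phi> $ K) holomorphic_on S"
        using r1(2) by (rule analytic_imp_holomorphic[OF analytic_on_subset]) (auto simp: S_def)
      have h2: "(\<psi> $ K) holomorphic_on S"
        using r2(2) by (rule analytic_imp_holomorphic[OF analytic_on_subset]) (auto simp: S_def)
      have evS: "\<forall>\<^sub>F t in at 0. t \<in> S"
        using eventually_at_in_open[of "ball 0 (min r1 r2)" 0] r1 r2 by (auto simp: S_def dist_0_norm elim: eventually_mono)
      have L: "\<forall>\<^sub>F t in at 0. (\<Sum>j\<le>n. a j t * (Dop \<gamma> c ^^ j) d t) = 0"
        using evS rhs e1 e2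
      proof (eventually_elim)
        case (elim t)
        have "(\<Sum>j\<le>n. a j t * (Dop \<gamma> c ^^ j) d t)
              = (\<Sum>j\<le>n. a j t * (Dop \<gamma> c ^^ j) (\<phi> $ K) t) - (\<Sum>j\<le>n. a j t * (Dop \<gamma> c ^^ j) (\<psi> $ K) t)"
          unfolding d_def using Dop_pow_diff[OF S h1 h2 elim(1)]
          by (simp add: right_diff_distrib sum_subtractf)
        also have "\<dots> = 0" using elim(2-4) by (simp add: lhs_nth c_def)
        finally show ?case .
      qed
      have "\<forall>\<^sub>F t in at 0. d t = 0"
      proof (rule main_analytic[OF _ _ r])
        show "isolated_singularity_at d 0" "not_essential d 0" using md by (auto simp: meromorphic_at_iff)
        show "\<forall>z::int. (\<Sum>j\<le>n. a j 0 * (c + \<i> * of_real \<gamma> * of_int z) ^ j) \<noteq> 0"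
          using assms(6) False unfolding c_def by auto
      qed (rule L)
      then show ?thesis by (rule eventually_mono) (simp add: d_def)
    qed
    then show ?case using Suc.IH less_Suc_eq by auto
  qed
  then show "\<forall>\<^sub>F t in at 0. (\<phi> $ k) t = (\<psi> $ k) t" for k by blast
qed

end
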